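(* If $\mathcal D$ is an edge-independent unbounded probabilistic graph (i.e. $\mathcal D$ belongs to the class of edge-independent graphs defined in the context), then $\mathcal D\notin\mathsf{sjfCQ}(\mathsf{BID})$.
   Context: Fix a countably infinite universe $U$ equipped with a linear order $<$. Facts are $R(u_1,\dots,u_{\mathrm{ar}(R)})$ with $R$ from a finite schema and $u_i\in U$; instances are finite sets of facts; $\mathrm{adom}(D)$ is the set of elements of $U$ occurring in $D$. A probabilistic database (PDB) is a discrete probability space $(\mathbb D,P)$ with $\mathbb D$ a nonempty countable set of instances; its possible worlds are instances of positive probability and $\mathrm{facts}(\mathcal D)$ is their union. A graph database is an instance over a single binary relation $E$; it is simple if it has no fact $E(a,a)$ and undirected if $E(a,b)\in D$ implies $E(b,a)\in D$. The class of edge-independent graphs consists of the PDBs $\mathcal D$ such that: every possible world is a simple undirected graph database; for every sequence of pairwise distinct two-element subsets $\{a_1,b_1\},\dots,\{a_k,b_k\}$ of $U$, $\Pr_{D\sim\mathcal D}(E(a_i,b_i)\in D\text{ for all }i)=\prod_i\Pr_{D\sim\mathcal D}(E(a_i,b_i)\in D)$; and for every $n\in\mathbb N$ there is a possible world $D$ with $|D|>n$. A PDB $\mathcal I$ is block-independent disjoint ($\mathsf{BID}$) if $\mathrm{facts}(\mathcal I)$ can be partitioned into blocks such that facts $f_1,\dots,f_k$ from pairwise different blocks satisfy $\Pr(f_1\in I,\dots,f_k\in I)=\prod_i\Pr(f_i\in I)$ and distinct facts $f,f'$ of the same block satisfy $\Pr(f\in I\text{ and }f'\in I)=0$. A self-join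 free conjunctive query is a formula built from relational atoms $R(\bar u)$ ($\bar u$ variables or constants) and equality atoms using only $\exists,\wedge$, with each relation symbol occurring at most once, evaluated under active domain semantics; an sjfCQ-view consists of one such formula $\Phi_R(x_1,\dots,x_{\mathrm{ar}(R)})$ per output relation $R$, mapping $D$ to the instance of all $R(\bar a)$ with $\bar a$ over $\mathrm{adom}(D)\cup\mathrm{adom}(\Phi_R)$ and $D\models\Phi_R[\bar a]$. The image of a PDB under a view $V$ is the push-forward distribution on $V(\mathbb D)$, and $\mathsf{sjfCQ}(\mathsf{BID})$ is the class of images of BID-PDBs under sjfCQ-views. *)

theory Defs
  imports "HOL-Probability.Probability" "HOL-Library.Disjoint_Sets"
begin

text \<open>Facts over a schema with relation symbols of type r and universe u:
  a fact R(u1,...,uk) is the pair (R, [u1,...,uk]).\<close>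

type_synonym ('r, 'u) fact = "'r \<times> 'u list"
type_synonym ('r, 'u) db_instance = "('r, 'u) fact set"

definition fact_over :: "'r set \<Rightarrow> ('r \<Rightarrow> nat) \<Rightarrow> ('r, 'u) fact \<Rightarrow> bool" where
  "fact_over S ar f \<longleftrightarrow> fst f \<in> S \<and> length (snd f) = ar (fst f)"

definition instance_over :: "'r set \<Rightarrow> ('r \<Rightarrow> nat) \<Rightarrow> ('r, 'u) db_instance \<Rightarrow> bool" where
  "instance_over S ar D \<longleftrightarrow> finite D \<and> (\<forall>f\<in>D. fact_over S ar f)"

definition adom :: "('r, 'u) db_instance \<Rightarrow> 'u set" where
  "adom D = (\<Union>f\<in>D. set (snd f))"

text \<open>A PDB is a discrete probability distribution (pmf) on instances; its possible
  worlds are the instances of positive probability (set_pmf).\<close>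

definition pdb_over :: "'r set \<Rightarrow> ('r \<Rightarrow> nat) \<Rightarrow> ('r, 'u) db_instance pmf \<Rightarrow> bool" where
  "pdb_over S ar I \<longleftrightarrow> (\<forall>D\<in>set_pmf I. instance_over S ar D)"

definition pdb_facts :: "'a set pmf \<Rightarrow> 'a set" where
  "pdb_facts I = (\<Union>D\<in>set_pmf I. D)"

definition BID :: "'r set \<Rightarrow> ('r \<Rightarrow> nat) \<Rightarrow> ('r, 'u) db_instance pmf \<Rightarrow> bool" where
  "BID S ar I \<longleftrightarrow> finite S \<and> pdb_over S ar I \<and>
     (\<exists>P. partition_on (pdb_facts I) P \<and>
        (\<forall>fs. set fs \<subseteq> pdb_facts I \<longrightarrow>
              (\<forall>i<length fs. \<forall>j<length fs. i \<noteq> j \<longrightarrow> \<not> (\<exists>B\<in>P. fs ! i \<in> B \<and> fs ! j \<in> B)) \<longrightarrow>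
              measure_pmf.prob I {D. \<forall>f\<in>set fs. f \<in> D}
                = prod_list (map (\<lambda>f. measure_pmf.prob I {D. f \<in> D}) fs)) \<and>
        (\<forall>B\<in>P. \<forall>f\<in>B. \<forall>f'\<in>B. f \<noteq> f' \<longrightarrow>
              measure_pmf.prob I {D. f \<in> D \<and> f' \<in> D} = 0))"

text \<open>A graph database is an instance over the single binary relation E;
  the fact E(a,b) is represented by the pair (a,b).\<close>

definition simple_graph_db :: "('u \<times> 'u) set \<Rightarrow> bool" where
  "simple_graph_db D \<longleftrightarrow> (\<forall>a. (a, a) \<notin> D)"

definition undirected_graph_db :: "('u \<times> 'u) set \<Rightarrow> bool" where
  "undirected_graph_db D \<longleftrightarrow> (\<forall>a b. (a, b) \<in> D \<longrightarrow> (b, a) \<in> D)"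

definition edge_independent_graph :: "('u \<times> 'u) set pmf \<Rightarrow> bool" where
  "edge_independent_graph G \<longleftrightarrow>
     (\<forall>D\<in>set_pmf G. finite D \<and> simple_graph_db D \<and> undirected_graph_db D) \<and>
     (\<forall>ps :: ('u \<times> 'u) list.
        (\<forall>(a, b)\<in>set ps. a \<noteq> b) \<longrightarrow> distinct (map (\<lambda>(a, b). {a, b}) ps) \<longrightarrow>
        measure_pmf.prob G {D. \<forall>(a, b)\<in>set ps. (a, b) \<in> D}
          = prod_list (map (\<lambda>(a, b). measure_pmf.prob G {D. (a, b) \<in> D}) ps)) \<and>
     (\<forall>n::nat. \<exists>D\<in>set_pmf G. card D > n)"

datatype 'u cq_term = Var nat | Const 'u

datatype ('r, 'u) cq =
    Atom 'r "'u cq_term list"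
  | Eq "'u cq_term" "'u cq_term"
  | Conj "('r, 'u) cq" "('r, 'u) cq"
  | Ex nat "('r, 'u) cq"

fun term_val :: "(nat \<Rightarrow> 'u) \<Rightarrow> 'u cq_term \<Rightarrow> 'u" where
  "term_val \<nu> (Var x) = \<nu> x"
| "term_val \<nu> (Const c) = c"

fun term_consts :: "'u cq_term \<Rightarrow> 'u set" where
  "term_consts (Var x) = {}"
| "term_consts (Const c) = {c}"

fun term_vars :: "'u cq_term \<Rightarrow> nat set" where
  "term_vars (Var x) = {x}"
| "term_vars (Const c) = {}"

fun cq_consts :: "('r, 'u) cq \<Rightarrow> 'u set" where
  "cq_consts (Atom R ts) = (\<Union>t\<in>set ts. term_consts t)"
| "cq_consts (Eq t1 t2) = term_consts t1 \<union> term_consts t2"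
| "cq_consts (Conj \<phi> \<psi>) = cq_consts \<phi> \<union> cq_consts \<psi>"
| "cq_consts (Ex x \<phi>) = cq_consts \<phi>"

fun cq_free_vars :: "('r, 'u) cq \<Rightarrow> nat set" where
  "cq_free_vars (Atom R ts) = (\<Union>t\<in>set ts. term_vars t)"
| "cq_free_vars (Eq t1 t2) = term_vars t1 \<union> term_vars t2"
| "cq_free_vars (Conj \<phi> \<psi>) = cq_free_vars \<phi> \<union> cq_free_vars \<psi>"
| "cq_free_vars (Ex x \<phi>) = cq_free_vars \<phi> - {x}"

fun cq_rels :: "('r, 'u) cq \<Rightarrow> 'r list" where
  "cq_rels (Atom R ts) = [R]"
| "cq_rels (Eq t1 t2) = []"
| "cq_rels (Conj \<phi> \<psi>) = cq_rels \<phi> @ cq_rels \<psi>"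
| "cq_rels (Ex x \<phi>) = cq_rels \<phi>"

fun cq_over :: "'r set \<Rightarrow> ('r \<Rightarrow> nat) \<Rightarrow> ('r, 'u) cq \<Rightarrow> bool" where
  "cq_over S ar (Atom R ts) \<longleftrightarrow> R \<in> S \<and> length ts = ar R"
| "cq_over S ar (Eq t1 t2) \<longleftrightarrow> True"
| "cq_over S ar (Conj \<phi> \<psi>) \<longleftrightarrow> cq_over S ar \<phi> \<and> cq_over S ar \<psi>"
| "cq_over S ar (Ex x \<phi>) \<longleftrightarrow> cq_over S ar \<phi>"

definition sjf_cq :: "'r set \<Rightarrow> ('r \<Rightarrow> nat) \<Rightarrow> ('r, 'u) cq \<Rightarrow> bool" where
  "sjf_cq S ar \<phi> \<longleftrightarrow> cq_over S ar \<phi> \<and> distinct (cq_rels \<phi>)"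

text \<open>Satisfaction, with quantifiers ranging over the domain A (active domain).\<close>
fun cq_sat :: "('r, 'u) db_instance \<Rightarrow> 'u set \<Rightarrow> (nat \<Rightarrow> 'u) \<Rightarrow> ('r, 'u) cq \<Rightarrow> bool" where
  "cq_sat D A \<nu> (Atom R ts) \<longleftrightarrow> (R, map (term_val \<nu>) ts) \<in> D"
| "cq_sat D A \<nu> (Eq t1 t2) \<longleftrightarrow> term_val \<nu> t1 = term_val \<nu> t2"
| "cq_sat D A \<nu> (Conj \<phi> \<psi>) \<longleftrightarrow> cq_sat D A \<nu> \<phi> \<and> cq_sat D A \<nu> \<psi>"
| "cq_sat D A \<nu> (Ex x \<phi>) \<longleftrightarrow> (\<exists>a\<in>A. cq_sat D A (\<nu>(x := a)) \<phi>)"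

text \<open>An sjfCQ-view with the single output relation E (binary), given by a formula
  Phi_E(x1, x2) whose free variables are among x1 = Var 0 and x2 = Var 1.\<close>
definition graph_view :: "('r, 'u) cq \<Rightarrow> ('r, 'u) db_instance \<Rightarrow> ('u \<times> 'u) set" where
  "graph_view \<Phi> D =
     (let A = adom D \<union> cq_consts \<Phi> in
      {(a, b). a \<in> A \<and> b \<in> A \<and> cq_sat D A ((\<lambda>_. a)(0 := a, 1 := b)) \<Phi>})"

definition sjfCQ_graph_view :: "'r set \<Rightarrow> ('r \<Rightarrow> nat) \<Rightarrow> ('r, 'u) cq \<Rightarrow> bool" where
  "sjfCQ_graph_view S ar \<Phi> \<longleftrightarrow> sjf_cq S ar \<Phi> \<and> cq_free_vars \<Phi> \<subseteq> {0, 1}"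

definition in_sjfCQ_BID :: "'r itself \<Rightarrow> ('u \<times> 'u) set pmf \<Rightarrow> bool" where
  "in_sjfCQ_BID _ G \<longleftrightarrow>
     (\<exists>(S :: 'r set) ar (I :: ('r, 'u) db_instance pmf) \<Phi>.
        BID S ar I \<and> sjfCQ_graph_view S ar \<Phi> \<and> G = map_pmf (graph_view \<Phi>) I)"

end

theory Submission
  imports Defs
begin


lemma term_val_hom:
  assumes "term_consts t \<subseteq> {c. h c = c}"
  shows "term_val (h \<circ> \<nu>) t = h (term_val \<nu> t)"
  using assms by (cases t) auto

lemma sat_hom:
  assumes "cq_sat D A \<nu> \<phi>"
    and "\<And>f. f \<in> D \<Longrightarrow> (fst f, map h (snd f)) \<in> D'"
    and "\<And>c. c \<in> cq_consts \<phi> \<Longrightarrow> h c = c"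
    and "h ` A \<subseteq> A'"
  shows "cq_sat D' A' (h \<circ> \<nu>) \<phi>"
  using assms
proof (induction \<phi> arbitrary: \<nu>)
  case (Atom R ts)
  have "map (term_val (h \<circ> \<nu>)) ts = map h (map (term_val \<nu>) ts)"
    using Atom.prems(3) by (auto intro!: term_val_hom)
  moreover have "(R, map (term_val \<nu>) ts) \<in> D" using Atom.prems(1) by simp
  then have "(R, map h (map (term_val \<nu>) ts)) \<in> D'" using Atom.prems(2) by (metis fst_conv snd_conv)
  ultimately show ?case by (simp only: cq_sat.simps)
next
  case (Eq t1 t2)
  have "term_val (h \<circ> \<nu>) t1 = h (term_val \<nu> t1)" "term_val (h \<circ> \<nu>) t2 = h (term_val \<nu> t2)"
    using Eq.prems(3) by (auto intro!: term_val_hom)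
  then show ?case using Eq.prems(1) by (simp only: cq_sat.simps)
next
  case (Conj \<phi>1 \<phi>2)
  then show ?case by simp
next
  case (Ex x \<phi>)
  from Ex.prems(1) obtain a where a: "a \<in> A" "cq_sat D A (\<nu>(x := a)) \<phi>" by auto
  have "cq_sat D' A' (h \<circ> (\<nu>(x := a))) \<phi>"
    using Ex.IH[OF a(2) Ex.prems(2)] Ex.prems(3,4) by (simp only: cq_consts.simps)
  moreover have "h \<circ> (\<nu>(x := a)) = (h \<circ> \<nu>)(x := h a)" by auto
  ultimately have "cq_sat D' A' ((h \<circ> \<nu>)(x := h a)) \<phi>" by simp
  moreover have "h a \<in> A'" using a(1) Ex.prems(4) by auto
  ultimately show ?case unfolding cq_sat.simps by blast
qed

lemma sat_mono:
  assumes "cq_sat D A \<nu> \<phi>" "D \<subseteq> D'" "A \<subseteq> A'"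
  shows "cq_sat D' A' \<nu> \<phi>"
  using sat_hom[OF assms(1), of id D' A'] assms by auto

lemma sat_nonrel:
  assumes "cq_sat D A \<nu> \<phi>" "\<And>f. f \<in> D \<Longrightarrow> fst f \<in> set (cq_rels \<phi>) \<Longrightarrow> f \<in> D'"
  shows "cq_sat D' A \<nu> \<phi>"
  using assms by (induction \<phi> arbitrary: \<nu>) auto

lemma sat_witness:
  assumes "distinct (cq_rels \<phi>)" "cq_sat D A \<nu> \<phi>"
  shows "\<exists>F\<subseteq>D. (\<forall>f\<in>F. fst f \<in> set (cq_rels \<phi>)) \<and> (\<forall>f\<in>F. \<forall>g\<in>F. fst f = fst g \<longrightarrow> f = g)
           \<and> cq_sat F A \<nu> \<phi>"
  using assms
proof (induction \<phi> arbitrary: \<nu>)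
  case (Atom R ts)
  then show ?case by (intro exI[of _ "{(R, map (term_val \<nu>) ts)}"]) auto
next
  case (Eq t1 t2)
  then show ?case by (intro exI[of _ "{}"]) auto
next
  case (Conj \<phi>1 \<phi>2)
  from Conj.prems have d: "distinct (cq_rels \<phi>1)" "distinct (cq_rels \<phi>2)"
    "set (cq_rels \<phi>1) \<inter> set (cq_rels \<phi>2) = {}" by auto
  have s1: "cq_sat D A \<nu> \<phi>1" and s2: "cq_sat D A \<nu> \<phi>2" using Conj.prems by auto
  from Conj.IH(1)[OF d(1) s1] obtain F1 where F1: "F1 \<subseteq> D" "\<forall>f\<in>F1. fst f \<in> set (cq_rels \<phi>1)"
    "\<forall>f\<in>F1. \<forall>g\<in>F1. fst f = fst g \<longrightarrow> f = g" "cq_sat F1 A \<nu> \<phi>1" by auto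
  from Conj.IH(2)[OF d(2) s2] obtain F2 where F2: "F2 \<subseteq> D" "\<forall>f\<in>F2. fst f \<in> set (cq_rels \<phi>2)"
    "\<forall>f\<in>F2. \<forall>g\<in>F2. fst f = fst g \<longrightarrow> f = g" "cq_sat F2 A \<nu> \<phi>2" by auto
  have "cq_sat (F1 \<union> F2) A \<nu> \<phi>1" "cq_sat (F1 \<union> F2) A \<nu> \<phi>2"
    using sat_mono[OF F1(4)] sat_mono[OF F2(4)] by auto
  moreover have "\<forall>f\<in>F1 \<union> F2. \<forall>g\<in>F1 \<union> F2. fst f = fst g \<longrightarrow> f = g"
  proof (intro ballI impI)
    fix f g assume fg: "f \<in> F1 \<union> F2" "g \<in> F1 \<union> F2" "fst f = fst g"
    show "f = g"
    proof (cases "f \<in> F1")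
      case True
      then have "g \<in> F1" using fg F1(2) F2(2) d(3) by (metis Un_iff disjoint_iff)
      then show ?thesis using True fg(3) F1(3) by blast
    next
      case False
      then have "f \<in> F2" using fg by auto
      then have "g \<in> F2" using fg F1(2) F2(2) d(3) by (metis Un_iff disjoint_iff)
      then show ?thesis using \<open>f \<in> F2\<close> fg(3) F2(3) by blast
    qed
  qed
  ultimately show ?case using F1(1,2) F2(1,2) by (intro exI[of _ "F1 \<union> F2"]) auto
next
  case (Ex x \<phi>)
  from Ex.prems obtain a where a: "a \<in> A" "cq_sat D A (\<nu>(x := a)) \<phi>" by auto
  have "\<exists>F\<subseteq>D. (\<forall>f\<in>F. fst f \<in> set (cq_rels \<phi>)) \<and> (\<forall>f\<in>F. \<forall>g\<in>F. fst f = fst g \<longrightarrow> f = g)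
           \<and> cq_sat F A (\<nu>(x := a)) \<phi>" using Ex.IH[OF _ a(2)] Ex.prems(1) by (simp only: cq_rels.simps)
  then obtain F where "F \<subseteq> D" "\<forall>f\<in>F. fst f \<in> set (cq_rels \<phi>)"
    "\<forall>f\<in>F. \<forall>g\<in>F. fst f = fst g \<longrightarrow> f = g" "cq_sat F A (\<nu>(x := a)) \<phi>" by auto
  then show ?case using a(1) by (intro exI[of _ F]) auto
qed

definition hb :: "'u \<Rightarrow> 'u \<Rightarrow> 'u \<Rightarrow> 'u" where
  "hb a b y = (if y = b then a else y)"

definition mixv :: "'u \<Rightarrow> 'u \<Rightarrow> (nat \<Rightarrow> 'u) \<Rightarrow> (nat \<Rightarrow> 'u) \<Rightarrow> nat \<Rightarrow> 'u" where
  "mixv a b \<nu>1 \<nu>2 x = (if \<nu>1 x = \<nu>2 x then \<nu>1 x else hb a b (\<nu>2 x))"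

lemma term_val_mix:
  "term_val (mixv a b \<nu>1 \<nu>2) t =
    (if term_val \<nu>1 t = term_val \<nu>2 t then term_val \<nu>1 t else hb a b (term_val \<nu>2 t))"
  by (cases t) (auto simp: mixv_def)

lemma sat_mix:
  assumes "cq_sat F A \<nu>1 \<phi>" "cq_sat W A \<nu>2 \<phi>"
    and "F \<subseteq> W" "\<forall>f\<in>F. \<forall>g\<in>F. fst f = fst g \<longrightarrow> f = g"
    and "\<forall>f\<in>W. b \<in> set (snd f) \<longrightarrow> f \<in> F" "a \<in> A"
  shows "cq_sat W A (mixv a b \<nu>1 \<nu>2) \<phi>"
  using assms
proof (induction \<phi> arbitrary: \<nu>1 \<nu>2)
  case (Atom R ts)
  let ?f1 = "(R, map (term_val \<nu>1) ts)" and ?f2 = "(R, map (term_val \<nu>2) ts)"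
  have f1: "?f1 \<in> F" and f2: "?f2 \<in> W" using Atom.prems by auto
  show ?case
  proof (cases "b \<in> set (map (term_val \<nu>2) ts)")
    case True
    then have "?f2 \<in> F" using Atom.prems(5) f2 by auto
    then have "?f1 = ?f2" using Atom.prems(4) f1 by (metis fst_conv)
    then have "\<forall>t\<in>set ts. term_val \<nu>1 t = term_val \<nu>2 t" by (simp add: map_eq_conv)
    then have e: "map (term_val (mixv a b \<nu>1 \<nu>2)) ts = map (term_val \<nu>1) ts"
      by (auto simp: term_val_mix)
    show ?thesis unfolding cq_sat.simps e using f1 Atom.prems(3) by blast
  next
    case False
    then have e: "map (term_val (mixv a b \<nu>1 \<nu>2)) ts = map (term_val \<nu>2) ts"
      by (auto simp: term_val_mix hb_def)
    show ?thesis unfolding cq_sat.simps e using f2 by blast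
  qed
next
  case (Eq t1 t2)
  then show ?case unfolding cq_sat.simps term_val_mix by presburger
next
  case (Conj \<phi>1 \<phi>2)
  then show ?case by auto
next
  case (Ex x \<phi>)
  from Ex.prems(1) obtain c1 where c1: "c1 \<in> A" "cq_sat F A (\<nu>1(x := c1)) \<phi>" by auto
  from Ex.prems(2) obtain c2 where c2: "c2 \<in> A" "cq_sat W A (\<nu>2(x := c2)) \<phi>" by auto
  have "cq_sat W A (mixv a b (\<nu>1(x := c1)) (\<nu>2(x := c2))) \<phi>"
    by (rule Ex.IH[OF c1(2) c2(2) Ex.prems(3) Ex.prems(4) Ex.prems(5) Ex.prems(6)])
  moreover have "mixv a b (\<nu>1(x := c1)) (\<nu>2(x := c2)) =
     (mixv a b \<nu>1 \<nu>2)(x := (if c1 = c2 then c1 else hb a b c2))"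
    by (auto simp: mixv_def)
  moreover have "(if c1 = c2 then c1 else hb a b c2) \<in> A"
    using c1 c2 Ex.prems(6) by (auto simp: hb_def)
  ultimately show ?case by auto
qed



definition sameblock :: "'a set set \<Rightarrow> 'a \<Rightarrow> 'a \<Rightarrow> bool" where
  "sameblock P f g \<longleftrightarrow> (\<exists>B\<in>P. f \<in> B \<and> g \<in> B)"

locale bidp =
  fixes I :: "'a set pmf" and P :: "'a set set"
  assumes indep: "\<And>fs. set fs \<subseteq> pdb_facts I \<Longrightarrow>
              (\<forall>i<length fs. \<forall>j<length fs. i \<noteq> j \<longrightarrow> \<not> (\<exists>B\<in>P. fs ! i \<in> B \<and> fs ! j \<in> B)) \<Longrightarrow>
              measure_pmf.prob I {D. \<forall>f\<in>set fs. f \<in> D}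
                = prod_list (map (\<lambda>f. measure_pmf.prob I {D. f \<in> D}) fs)"
  and excl: "\<And>B f f'. B \<in> P \<Longrightarrow> f \<in> B \<Longrightarrow> f' \<in> B \<Longrightarrow> f \<noteq> f' \<Longrightarrow>
              measure_pmf.prob I {D. f \<in> D \<and> f' \<in> D} = 0"
  and fin: "\<And>D. D \<in> set_pmf I \<Longrightarrow> finite D"
begin

abbreviation Pr where "Pr A \<equiv> measure_pmf.prob I A"
definition w where "w f = Pr {D. f \<in> D}"

lemma w_nonneg: "w f \<ge> 0" by (simp add: w_def)

lemma idx_cond:
  assumes "distinct fs" "\<And>f g. f \<in> set fs \<Longrightarrow> g \<in> set fs \<Longrightarrow> f \<noteq> g \<Longrightarrow> \<not> sameblock P f g"
  shows "\<forall>i<length fs. \<forall>j<length fs. i \<noteq> j \<longrightarrow> \<not> (\<exists>B\<in>P. fs ! i \<in> B \<and> fs ! j \<in> B)"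
proof (intro allI impI)
  fix i j assume ij: "i < length fs" "j < length fs" "i \<noteq> j"
  then have "fs ! i \<noteq> fs ! j" using assms(1) by (simp add: nth_eq_iff_index_eq)
  then have "\<not> sameblock P (fs ! i) (fs ! j)" using assms(2) ij by auto
  then show "\<not> (\<exists>B\<in>P. fs ! i \<in> B \<and> fs ! j \<in> B)" by (simp add: sameblock_def)
qed

lemma world_pos:
  assumes "D0 \<in> set_pmf I" "F \<subseteq> D0"
  shows "Pr {D. F \<subseteq> D} > 0"
  using assms by (intro measure_pmf_posI[of D0]) auto

lemma world_blocks:
  assumes "D0 \<in> set_pmf I" "f \<in> D0" "g \<in> D0" "f \<noteq> g"
  shows "\<not> sameblock P f g"
proof
  assume "sameblock P f g"
  then obtain B where "B \<in> P" "f \<in> B" "g \<in> B" by (auto simp: sameblock_def)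
  then have "Pr {D. f \<in> D \<and> g \<in> D} = 0" using excl assms(4) by blast
  moreover have "Pr {D. {f, g} \<subseteq> D} > 0" by (rule world_pos[OF assms(1)]) (use assms in auto)
  moreover have "{D. {f, g} \<subseteq> D} = {D. f \<in> D \<and> g \<in> D}" by auto
  ultimately show False by simp
qed

lemma facts_of_world: "D \<in> set_pmf I \<Longrightarrow> D \<subseteq> pdb_facts I"
  by (auto simp: pdb_facts_def)

lemma pair_bound:
  assumes "f \<in> pdb_facts I" "g \<in> pdb_facts I" "f \<noteq> g"
  shows "Pr {D. f \<in> D \<and> g \<in> D} \<le> w f * w g"
proof (cases "sameblock P f g")
  case True
  then obtain B where "B \<in> P" "f \<in> B" "g \<in> B" by (auto simp: sameblock_def)
  then have "Pr {D. f \<in> D \<and> g \<in> D} = 0" using excl assms(3) by blast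
  then show ?thesis by (simp add: w_nonneg)
next
  case False
  then have ns: "\<not> sameblock P g f" by (auto simp: sameblock_def)
  have "Pr {D. \<forall>x\<in>set [f, g]. x \<in> D} = prod_list (map (\<lambda>x. Pr {D. x \<in> D}) [f, g])"
  proof (rule indep)
    show "set [f, g] \<subseteq> pdb_facts I" using assms by simp
    show "\<forall>i<length [f, g]. \<forall>j<length [f, g]. i \<noteq> j \<longrightarrow> \<not> (\<exists>B\<in>P. [f, g] ! i \<in> B \<and> [f, g] ! j \<in> B)"
      by (rule idx_cond) (use assms False ns in auto)
  qed
  then show ?thesis by (simp add: w_def)
qed

lemma ext_bound:
  assumes "D0 \<in> set_pmf I" "F \<subseteq> D0" "x \<in> pdb_facts I" "x \<notin> F"
  shows "Pr {D. insert x F \<subseteq> D} \<le> Pr {D. F \<subseteq> D} * w x"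
proof -
  have finF: "finite F" using fin[OF assms(1)] assms(2) finite_subset by blast
  obtain xs where xs: "set xs = F" "distinct xs" using finite_distinct_list[OF finF] by blast
  have Ff: "F \<subseteq> pdb_facts I" using assms(1,2) facts_of_world by blast
  show ?thesis
  proof (cases "\<exists>f\<in>F. sameblock P f x")
    case True
    then obtain f B where "f \<in> F" "B \<in> P" "f \<in> B" "x \<in> B" by (auto simp: sameblock_def)
    then have "Pr {D. f \<in> D \<and> x \<in> D} = 0" using excl assms(4) by metis
    moreover have "Pr {D. insert x F \<subseteq> D} \<le> Pr {D. f \<in> D \<and> x \<in> D}"
      using \<open>f \<in> F\<close> by (intro measure_pmf.finite_measure_mono) auto
    moreover have "Pr {D. F \<subseteq> D} * w x \<ge> 0" by (simp add: w_nonneg)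
    ultimately show ?thesis by linarith
  next
    case False
    have e1: "Pr {D. \<forall>f\<in>set xs. f \<in> D} = prod_list (map (\<lambda>f. Pr {D. f \<in> D}) xs)"
    proof (rule indep)
      show "set xs \<subseteq> pdb_facts I" using xs Ff by simp
      show "\<forall>i<length xs. \<forall>j<length xs. i \<noteq> j \<longrightarrow> \<not> (\<exists>B\<in>P. xs ! i \<in> B \<and> xs ! j \<in> B)"
        using xs world_blocks[OF assms(1)] assms(2) by (intro idx_cond) auto
    qed
    have e2: "Pr {D. \<forall>f\<in>set (x # xs). f \<in> D} = prod_list (map (\<lambda>f. Pr {D. f \<in> D}) (x # xs))"
    proof (rule indep)
      show "set (x # xs) \<subseteq> pdb_facts I" using xs Ff assms(3) by simp
      show "\<forall>i<length (x # xs). \<forall>j<length (x # xs). i \<noteq> j \<longrightarrow> \<not> (\<exists>B\<in>P. (x # xs) ! i \<in> B \<and> (x # xs) ! j \<in> B)"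
      proof (rule idx_cond)
        show "distinct (x # xs)" using xs assms(4) by simp
        fix f g assume "f \<in> set (x # xs)" "g \<in> set (x # xs)" "f \<noteq> g"
        then show "\<not> sameblock P f g"
          using xs world_blocks[OF assms(1)] assms(2) False
          by (auto simp: sameblock_def)
      qed
    qed
    have "{D. \<forall>f\<in>set (x # xs). f \<in> D} = {D. insert x F \<subseteq> D}" "{D. \<forall>f\<in>set xs. f \<in> D} = {D. F \<subseteq> D}"
      using xs by auto
    then show ?thesis using e1 e2 by (simp add: w_def mult.commute)
  qed
qed

end


context bidp begin

lemma int_bd: "(\<And>x. \<bar>f x\<bar> \<le> B) \<Longrightarrow> integrable (measure_pmf I) (f :: _ \<Rightarrow> real)"
  by (intro measure_pmf.integrable_const_bound[where B=B]) auto

lemma exp_ind: "measure_pmf.expectation I (\<lambda>D. of_bool (Q D) :: real) = Pr {D. Q D}"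
proof -
  have "(\<lambda>D. of_bool (Q D) :: real) = indicator {D. Q D}" by (auto simp: indicator_def)
  then show ?thesis by simp
qed

lemma exp_sum_ind:
  assumes "finite X"
  shows "measure_pmf.expectation I (\<lambda>D. \<Sum>x\<in>X. of_bool (Q x D) :: real) = (\<Sum>x\<in>X. Pr {D. Q x D})"
proof -
  have "measure_pmf.expectation I (\<lambda>D. \<Sum>x\<in>X. of_bool (Q x D) :: real)
      = (\<Sum>x\<in>X. measure_pmf.expectation I (\<lambda>D. of_bool (Q x D) :: real))"
    by (rule Bochner_Integration.integral_sum) (rule int_bd[where B=1], simp)
  then show ?thesis by (simp only: exp_ind)
qed

lemma sum_ind_bd:
  assumes "finite X"
  shows "\<bar>\<Sum>x\<in>X. of_bool (Q x D) :: real\<bar> \<le> real (card X)"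
proof -
  have "(\<Sum>x\<in>X. of_bool (Q x D) :: real) \<ge> 0" by (intro sum_nonneg) auto
  moreover have "(\<Sum>x\<in>X. of_bool (Q x D) :: real) \<le> (\<Sum>x\<in>X. 1)" by (intro sum_mono) auto
  ultimately show ?thesis by simp
qed

lemma small_tail_card: "\<exists>K::nat. Pr {D. K < card D} < 1/2"
proof -
  define A where "A n = {D::'a set. n < card D}" for n :: nat
  have "(\<lambda>n. Pr (A n)) \<longlonglongrightarrow> Pr (\<Inter>n. A n)"
    by (rule measure_pmf.finite_Lim_measure_decseq) (auto simp: decseq_def A_def)
  moreover have "(\<Inter>n. A n) = {}" by (auto simp: A_def)
  ultimately have "(\<lambda>n. Pr (A n)) \<longlonglongrightarrow> 0" by simp
  then have "eventually (\<lambda>n. Pr (A n) < 1/2) sequentially" by (rule order_tendstoD) simp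
  then obtain K where "Pr (A K) < 1/2" by (auto simp: eventually_sequentially)
  then show ?thesis by (auto simp: A_def)
qed

lemma sum_bounded: "\<exists>M. \<forall>Fin. finite Fin \<longrightarrow> Fin \<subseteq> pdb_facts I \<longrightarrow> sum w Fin \<le> M"
proof -
  obtain K :: nat where K: "Pr {D. K < card D} < 1/2" using small_tail_card by blast
  define M :: real where "M = max 8 (2 * real K)"
  have "sum w Fin \<le> M" if Fin: "finite Fin" "Fin \<subseteq> pdb_facts I" for Fin
  proof (rule ccontr)
    define m where "m = sum w Fin"
    assume "\<not> sum w Fin \<le> M"
    then have m8: "m > 8" and mK: "m > 2 * real K" by (auto simp: M_def m_def)
    define N where "N D = (\<Sum>f\<in>Fin. of_bool (f \<in> D) :: real)" for D
    have Nbd: "\<bar>N D\<bar> \<le> real (card Fin)" for D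
      unfolding N_def by (rule sum_ind_bd[OF Fin(1)])
    have intN: "integrable (measure_pmf I) N" by (rule int_bd[OF Nbd])
    have EN: "measure_pmf.expectation I N = m"
      unfolding N_def m_def w_def by (rule exp_sum_ind[OF Fin(1)])
    have N2: "(N D)\<^sup>2 = (\<Sum>f\<in>Fin. \<Sum>g\<in>Fin. of_bool (f \<in> D \<and> g \<in> D))" for D
      unfolding N_def power2_eq_square sum_product by (intro sum.cong refl) auto
    have EN2: "measure_pmf.expectation I (\<lambda>D. (N D)\<^sup>2) = (\<Sum>f\<in>Fin. \<Sum>g\<in>Fin. Pr {D. f \<in> D \<and> g \<in> D})"
    proof -
      have "measure_pmf.expectation I (\<lambda>D. (\<Sum>f\<in>Fin. \<Sum>g\<in>Fin. of_bool (f \<in> D \<and> g \<in> D) :: real))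
         = (\<Sum>f\<in>Fin. measure_pmf.expectation I (\<lambda>D. \<Sum>g\<in>Fin. of_bool (f \<in> D \<and> g \<in> D) :: real))"
        by (rule Bochner_Integration.integral_sum) (rule int_bd, rule sum_ind_bd[OF Fin(1)])
      also have "\<dots> = (\<Sum>f\<in>Fin. \<Sum>g\<in>Fin. Pr {D. f \<in> D \<and> g \<in> D})"
        by (intro sum.cong refl exp_sum_ind[OF Fin(1)])
      finally show ?thesis unfolding N2 .
    qed
    have bnd: "Pr {D. f \<in> D \<and> g \<in> D} \<le> (if f = g then w f else 0) + w f * w g"
      if "f \<in> Fin" "g \<in> Fin" for f g
    proof (cases "f = g")
      case True
      then show ?thesis by (simp add: w_def)
    next
      case False
      then show ?thesis using pair_bound[of f g] that Fin(2) by auto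
    qed
    have "(\<Sum>f\<in>Fin. \<Sum>g\<in>Fin. Pr {D. f \<in> D \<and> g \<in> D})
        \<le> (\<Sum>f\<in>Fin. \<Sum>g\<in>Fin. (if f = g then w f else 0) + w f * w g)"
      by (intro sum_mono bnd)
    also have "\<dots> = m + m * m"
      using Fin(1) by (simp add: sum.distrib m_def sum_product)
    finally have EN2le: "measure_pmf.expectation I (\<lambda>D. (N D)\<^sup>2) \<le> m + m * m" using EN2 by simp
    have "\<bar>(N D)\<^sup>2\<bar> \<le> real (card Fin) ^ 2" for D
      using power_mono[OF Nbd[of D] abs_ge_zero, of 2] by simp
    then have intN2: "integrable (measure_pmf I) (\<lambda>D. (N D)\<^sup>2)"
      by (rule int_bd)
    have sq: "(\<lambda>D. (N D - m)\<^sup>2) = (\<lambda>D. (N D)\<^sup>2 - (2 * m) * N D + m * m)"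
      by (auto simp: power2_eq_square algebra_simps)
    have "measure_pmf.expectation I (\<lambda>D. (N D - m)\<^sup>2)
        = measure_pmf.expectation I (\<lambda>D. (N D)\<^sup>2) - (2 * m) * measure_pmf.expectation I N + m * m"
      unfolding sq using intN intN2 by simp
    also have "\<dots> \<le> m" using EN2le EN by simp
    finally have Var: "measure_pmf.expectation I (\<lambda>D. (N D - m)\<^sup>2) \<le> m" .
    have intV: "integrable (measure_pmf I) (\<lambda>D. (N D - m) ^ 2)"
      unfolding sq using intN intN2 by simp
    have "measure (measure_pmf I) {x \<in> space (measure_pmf I). \<bar>N x - m\<bar> \<ge> m / 2}
        \<le> measure_pmf.expectation I (\<lambda>D. (N D - m) ^ 2) / (m / 2)\<^sup>2"
      by (rule measure_pmf.second_moment_method) (use intV m8 in auto)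
    also have "\<dots> \<le> m / (m / 2)\<^sup>2" using Var m8 by (intro divide_right_mono) auto
    also have "\<dots> = 4 / m" using m8 by (simp add: power2_eq_square field_simps)
    also have "\<dots> < 1/2" using m8 by (simp add: field_simps)
    finally have ch: "Pr {D. \<bar>N D - m\<bar> \<ge> m / 2} < 1/2" by simp
    have "Pr {D. \<bar>N D - m\<bar> < m / 2} = 1 - Pr {D. \<bar>N D - m\<bar> \<ge> m / 2}"
    proof -
      have e: "{D. \<bar>N D - m\<bar> < m / 2} = space (measure_pmf I) - {D. \<bar>N D - m\<bar> \<ge> m / 2}" by auto
      have c: "Pr (space (measure_pmf I) - {D. \<bar>N D - m\<bar> \<ge> m / 2}) = 1 - Pr {D. \<bar>N D - m\<bar> \<ge> m / 2}"
        by (rule measure_pmf.prob_compl) simp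
      show ?thesis by (subst e) (rule c)
    qed
    then have gt: "Pr {D. \<bar>N D - m\<bar> < m / 2} > 1/2" using ch by simp
    have "{D. \<bar>N D - m\<bar> < m / 2} \<inter> set_pmf I \<subseteq> {D. K < card D}"
    proof
      fix D assume D: "D \<in> {D. \<bar>N D - m\<bar> < m / 2} \<inter> set_pmf I"
      have "N D = real (card (Fin \<inter> D))"
      proof -
        have "N D = (\<Sum>f\<in>Fin. if f \<in> D then 1 else 0)" unfolding N_def by (simp add: of_bool_def)
        also have "\<dots> = (\<Sum>f\<in>Fin \<inter> D. 1)" by (rule sum.inter_restrict[OF Fin(1), symmetric])
        finally show ?thesis by simp
      qed
      moreover have "card (Fin \<inter> D) \<le> card D" using fin D by (intro card_mono) auto
      ultimately have "N D \<le> real (card D)" by simp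
      moreover have "N D > real K"
      proof -
        have "\<bar>N D - m\<bar> < m / 2" using D by simp
        then have "N D > m / 2" by linarith
        then show ?thesis using mK by linarith
      qed
      ultimately show "D \<in> {D. K < card D}" by simp
    qed
    then have "Pr ({D. \<bar>N D - m\<bar> < m / 2} \<inter> set_pmf I) \<le> Pr {D. K < card D}"
      by (intro measure_pmf.finite_measure_mono) auto
    then have "Pr {D. \<bar>N D - m\<bar> < m / 2} \<le> Pr {D. K < card D}"
      by (simp add: measure_Int_set_pmf)
    then show False using gt K by simp
  qed
  then show ?thesis by blast
qed

end


context bidp begin

lemma tail_small:
  "\<exists>Ffin. finite Ffin \<and> (\<forall>X. finite X \<longrightarrow> X \<subseteq> pdb_facts I - Ffin \<longrightarrow> sum w X \<le> 1/2)"
proof (rule ccontr)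
  assume H0: "\<not> ?thesis"
  have H: "\<exists>X. finite X \<and> X \<subseteq> pdb_facts I - Ffin \<and> sum w X > 1/2" if "finite Ffin" for Ffin
  proof -
    have "\<not> (\<forall>X. finite X \<longrightarrow> X \<subseteq> pdb_facts I - Ffin \<longrightarrow> sum w X \<le> 1/2)"
      using H0 that by blast
    then show ?thesis by (meson not_le)
  qed
  have "\<exists>Fin. finite Fin \<and> Fin \<subseteq> pdb_facts I \<and> sum w Fin \<ge> real n / 2" for n :: nat
  proof (induction n)
    case 0
    then show ?case by (intro exI[of _ "{}"]) auto
  next
    case (Suc n)
    then obtain Fin where Fin: "finite Fin" "Fin \<subseteq> pdb_facts I" "sum w Fin \<ge> real n / 2" by blast
    obtain X where X: "finite X" "X \<subseteq> pdb_facts I - Fin" "sum w X > 1/2" using H[OF Fin(1)] by blast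
    have "sum w (Fin \<union> X) = sum w Fin + sum w X"
      using Fin(1) X(1,2) by (intro sum.union_disjoint) auto
    then show ?case using Fin X by (intro exI[of _ "Fin \<union> X"]) auto
  qed
  moreover obtain M where M: "\<forall>Fin. finite Fin \<longrightarrow> Fin \<subseteq> pdb_facts I \<longrightarrow> sum w Fin \<le> M"
    using sum_bounded by blast
  ultimately obtain Fin where Fin: "finite Fin" "Fin \<subseteq> pdb_facts I" "sum w Fin \<ge> real (nat \<lceil>2 * M\<rceil> + 1) / 2"
    by blast
  moreover have "real (nat \<lceil>2 * M\<rceil> + 1) / 2 > M"
  proof -
    have c: "2 * M \<le> of_int \<lceil>2 * M\<rceil>" by (rule le_of_int_ceiling)
    have "2 * M \<le> real (nat \<lceil>2 * M\<rceil>)"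
    proof (cases "\<lceil>2 * M\<rceil> \<ge> 0")
      case True
      then show ?thesis using c by simp
    next
      case False
      then show ?thesis using c by linarith
    qed
    then show ?thesis by simp
  qed
  moreover have "sum w Fin \<le> M" using M Fin(1,2) by blast
  ultimately show False by linarith
qed

lemma countable_facts: "countable (pdb_facts I)"
  unfolding pdb_facts_def
  by (intro countable_UN[OF countable_set_pmf] countable_finite fin)

lemma avoid:
  assumes D0: "D0 \<in> set_pmf I" and F: "F \<subseteq> D0" and Xb: "Xb \<subseteq> pdb_facts I" "F \<inter> Xb = {}"
    and small: "\<And>X. finite X \<Longrightarrow> X \<subseteq> Xb \<Longrightarrow> sum w X \<le> 1/2"
  shows "\<exists>W\<in>set_pmf I. F \<subseteq> W \<and> W \<inter> Xb = {}"
proof -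
  define p where "p = Pr {D. F \<subseteq> D}"
  have p0: "p > 0" unfolding p_def by (rule world_pos[OF D0 F])
  have fb: "Pr {D. F \<subseteq> D \<and> D \<inter> X \<noteq> {}} \<le> p / 2" if X: "finite X" "X \<subseteq> Xb" for X
  proof -
    have "{D. F \<subseteq> D \<and> D \<inter> X \<noteq> {}} = (\<Union>x\<in>X. {D. insert x F \<subseteq> D})" by auto
    moreover have "Pr (\<Union>x\<in>X. {D. insert x F \<subseteq> D}) \<le> (\<Sum>x\<in>X. Pr {D. insert x F \<subseteq> D})"
      by (rule measure_pmf.finite_measure_subadditive_finite[OF X(1)]) simp
    ultimately have "Pr {D. F \<subseteq> D \<and> D \<inter> X \<noteq> {}} \<le> (\<Sum>x\<in>X. Pr {D. insert x F \<subseteq> D})" by simp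
    also have "\<dots> \<le> (\<Sum>x\<in>X. p * w x)"
    proof (rule sum_mono)
      fix x assume "x \<in> X"
      then have "x \<in> pdb_facts I" "x \<notin> F" using X Xb by auto
      then show "Pr {D. insert x F \<subseteq> D} \<le> p * w x" unfolding p_def by (rule ext_bound[OF D0 F])
    qed
    also have "\<dots> = p * sum w X" by (simp add: sum_distrib_left)
    also have "\<dots> \<le> p * (1/2)" using small[OF X] p0 by (intro mult_left_mono) auto
    finally show ?thesis by simp
  qed
  have big: "Pr {D. F \<subseteq> D \<and> D \<inter> Xb \<noteq> {}} \<le> p / 2"
  proof (cases "Xb = {}")
    case True
    then show ?thesis using p0 by simp
  next
    case False
    have cXb: "countable Xb" using countable_facts Xb(1) countable_subset by blast
    define e where "e = from_nat_into Xb"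
    have re: "range e = Xb" unfolding e_def using False cXb by simp
    define E where "E n = {D. F \<subseteq> D \<and> D \<inter> e ` {..<n} \<noteq> {}}" for n
    have inc: "incseq E"
    proof (rule incseq_SucI)
      fix n
      have "e ` {..<n} \<subseteq> e ` {..<Suc n}" by auto
      then show "E n \<subseteq> E (Suc n)" unfolding E_def by blast
    qed
    have un: "(\<Union>n. E n) = {D. F \<subseteq> D \<and> D \<inter> Xb \<noteq> {}}"
    proof
      show "(\<Union>n. E n) \<subseteq> {D. F \<subseteq> D \<and> D \<inter> Xb \<noteq> {}}" using re by (auto simp: E_def)
      show "{D. F \<subseteq> D \<and> D \<inter> Xb \<noteq> {}} \<subseteq> (\<Union>n. E n)"
      proof
        fix D assume "D \<in> {D. F \<subseteq> D \<and> D \<inter> Xb \<noteq> {}}"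
        then obtain x where "F \<subseteq> D" "x \<in> D" "x \<in> Xb" by auto
        then obtain k where "e k = x" using re by auto
        then have "D \<in> E (Suc k)" using \<open>F \<subseteq> D\<close> \<open>x \<in> D\<close> by (auto simp: E_def)
        then show "D \<in> (\<Union>n. E n)" by blast
      qed
    qed
    have "(\<lambda>n. Pr (E n)) \<longlonglongrightarrow> Pr (\<Union>n. E n)"
      by (rule measure_pmf.finite_Lim_measure_incseq) (use inc in auto)
    moreover have "Pr (E n) \<le> p / 2" for n
      unfolding E_def by (rule fb) (use re in auto)
    ultimately have "Pr (\<Union>n. E n) \<le> p / 2" by (intro LIMSEQ_le_const2) auto
    then show ?thesis using un by simp
  qed
  have "Pr ({D. F \<subseteq> D} - {D. F \<subseteq> D \<and> D \<inter> Xb \<noteq> {}}) = p - Pr {D. F \<subseteq> D \<and> D \<inter> Xb \<noteq> {}}"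
    unfolding p_def by (rule measure_pmf.finite_measure_Diff) auto
  then have "Pr ({D. F \<subseteq> D} - {D. F \<subseteq> D \<and> D \<inter> Xb \<noteq> {}}) > 0" using big p0 by simp
  then have "set_pmf I \<inter> ({D. F \<subseteq> D} - {D. F \<subseteq> D \<and> D \<inter> Xb \<noteq> {}}) \<noteq> {}"
    using measure_pmf_zero_iff[of I "{D. F \<subseteq> D} - {D. F \<subseteq> D \<and> D \<inter> Xb \<noteq> {}}"] by (auto simp: Int_commute)
  then show ?thesis by blast
qed

end


lemma gv_iff:
  "(a, b) \<in> graph_view \<Phi> D \<longleftrightarrow> a \<in> adom D \<union> cq_consts \<Phi> \<and> b \<in> adom D \<union> cq_consts \<Phi> \<and>
     cq_sat D (adom D \<union> cq_consts \<Phi>) ((\<lambda>_. a)(0 := a, 1 := b)) \<Phi>"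
  by (simp add: graph_view_def Let_def)

lemma adom_mem: "x \<in> adom D \<longleftrightarrow> (\<exists>f\<in>D. x \<in> set (snd f))"
  by (auto simp: adom_def)

lemma adom_mono: "D \<subseteq> D' \<Longrightarrow> adom D \<subseteq> adom D'"
  by (auto simp: adom_def)

theorem lemma7p10:
  fixes G :: "('u :: {countable, linorder} \<times> 'u) set pmf"
  assumes "infinite (UNIV :: 'u set)"
    and "edge_independent_graph G"
  shows "\<not> in_sjfCQ_BID TYPE('r) G"
proof
  assume "in_sjfCQ_BID TYPE('r) G"
  then obtain S :: "'r set" and ar and I :: "('r, 'u) db_instance pmf" and \<Phi>
    where bid: "BID S ar I" and view: "sjfCQ_graph_view S ar \<Phi>" and GI: "G = map_pmf (graph_view \<Phi>) I"
    unfolding in_sjfCQ_BID_def by blast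
  from bid obtain P where
    ind: "\<forall>fs. set fs \<subseteq> pdb_facts I \<longrightarrow>
              (\<forall>i<length fs. \<forall>j<length fs. i \<noteq> j \<longrightarrow> \<not> (\<exists>B\<in>P. fs ! i \<in> B \<and> fs ! j \<in> B)) \<longrightarrow>
              measure_pmf.prob I {D. \<forall>f\<in>set fs. f \<in> D}
                = prod_list (map (\<lambda>f. measure_pmf.prob I {D. f \<in> D}) fs)"
    and exc: "\<forall>B\<in>P. \<forall>f\<in>B. \<forall>f'\<in>B. f \<noteq> f' \<longrightarrow> measure_pmf.prob I {D. f \<in> D \<and> f' \<in> D} = 0"
    and po: "pdb_over S ar I"
    unfolding BID_def by blast
  have finW: "finite D" if "D \<in> set_pmf I" for D
    using po that by (auto simp: pdb_over_def instance_over_def)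
  interpret bidp I P
    by unfold_locales (use ind exc finW in blast)+
  let ?V = "graph_view \<Phi>"
  let ?C = "cq_consts \<Phi>"
  have Gw: "?V D \<in> set_pmf G" if "D \<in> set_pmf I" for D using that GI by simp
  have simple: "(x, x) \<notin> ?V D" if "D \<in> set_pmf I" for D x
    using assms(2) Gw[OF that] by (auto simp: edge_independent_graph_def simple_graph_db_def)
  have undir: "(y, x) \<in> ?V D" if "D \<in> set_pmf I" "(x, y) \<in> ?V D" for D x y
    using assms(2) Gw[OF that(1)] that(2) by (auto simp: edge_independent_graph_def undirected_graph_db_def)
  have finV: "finite (?V D)" if "D \<in> set_pmf I" for D
    using assms(2) Gw[OF that] by (auto simp: edge_independent_graph_def)
  have unb: "\<exists>D\<in>set_pmf I. card (?V D) > n" for n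
    using assms(2) GI by (auto simp: edge_independent_graph_def)
  have dist: "distinct (cq_rels \<Phi>)" using view by (simp add: sjfCQ_graph_view_def sjf_cq_def)
  obtain Ffin where Ffin: "finite Ffin" "\<And>X. finite X \<Longrightarrow> X \<subseteq> pdb_facts I - Ffin \<Longrightarrow> sum w X \<le> 1/2"
    using tail_small by blast
  define H where "H = adom Ffin"
  have finH: "finite H" unfolding H_def adom_def using Ffin(1) by auto
  obtain D0 where D0: "D0 \<in> set_pmf I" "card (?V D0) > card (H \<times> H)" using unb by blast
  have "\<not> ?V D0 \<subseteq> H \<times> H"
  proof
    assume "?V D0 \<subseteq> H \<times> H"
    then have "card (?V D0) \<le> card (H \<times> H)" using finH by (intro card_mono) auto
    then show False using D0(2) by simp
  qed
  then obtain a b where ab: "(a, b) \<in> ?V D0" "b \<notin> H"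
    using undir[OF D0(1)] by auto
  have ab_ne: "a \<noteq> b" using simple[OF D0(1)] ab(1) by auto
  define A0 where "A0 = adom D0 \<union> ?C"
  define \<nu>1 where "\<nu>1 = (\<lambda>_::nat. a)(0 := a, 1 := b)"
  have aA0: "a \<in> A0" and bA0: "b \<in> A0" and sat0: "cq_sat D0 A0 \<nu>1 \<Phi>"
    using ab(1) unfolding gv_iff A0_def \<nu>1_def by auto
  obtain F1 where F1: "F1 \<subseteq> D0" "\<forall>f\<in>F1. \<forall>g\<in>F1. fst f = fst g \<longrightarrow> f = g" "cq_sat F1 A0 \<nu>1 \<Phi>"
    using sat_witness[OF dist sat0] by blast
  define A1 where "A1 = adom F1 \<union> ?C"
  have aA1: "a \<in> A1"
  proof (rule ccontr)
    assume na: "a \<notin> A1"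
    define h where "h x = (if x = a then b else x)" for x
    have "cq_sat D0 A0 (h \<circ> \<nu>1) \<Phi>"
    proof (rule sat_hom[OF F1(3)])
      fix f assume "f \<in> F1"
      then have "map h (snd f) = snd f" using na by (auto simp: A1_def adom_mem h_def intro!: map_idI)
      then show "(fst f, map h (snd f)) \<in> D0" using \<open>f \<in> F1\<close> F1(1) by auto
    next
      fix c assume "c \<in> ?C" then show "h c = c" using na by (auto simp: A1_def h_def)
    next
      show "h ` A0 \<subseteq> A0" using bA0 by (auto simp: h_def)
    qed
    moreover have "h \<circ> \<nu>1 = (\<lambda>_::nat. b)(0 := b, 1 := b)" using ab_ne by (auto simp: h_def \<nu>1_def)
    ultimately have "(b, b) \<in> ?V D0" unfolding gv_iff using bA0 by (simp add: A0_def)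
    then show False using simple[OF D0(1)] by blast
  qed
  have bA1: "b \<in> A1"
  proof (rule ccontr)
    assume nb: "b \<notin> A1"
    define h where "h x = (if x = b then a else x)" for x
    have "cq_sat D0 A0 (h \<circ> \<nu>1) \<Phi>"
    proof (rule sat_hom[OF F1(3)])
      fix f assume "f \<in> F1"
      then have "map h (snd f) = snd f" using nb by (auto simp: A1_def adom_mem h_def intro!: map_idI)
      then show "(fst f, map h (snd f)) \<in> D0" using \<open>f \<in> F1\<close> F1(1) by auto
    next
      fix c assume "c \<in> ?C" then show "h c = c" using nb by (auto simp: A1_def h_def)
    next
      show "h ` A0 \<subseteq> A0" using aA0 by (auto simp: h_def)
    qed
    moreover have "h \<circ> \<nu>1 = (\<lambda>_::nat. a)(0 := a, 1 := a)" using ab_ne by (auto simp: h_def \<nu>1_def)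
    ultimately have "(a, a) \<in> ?V D0" unfolding gv_iff using aA0 by (simp add: A0_def)
    then show False using simple[OF D0(1)] by blast
  qed
  define Xb where "Xb = {f \<in> pdb_facts I. b \<in> set (snd f)} - F1"
  have "\<exists>W\<in>set_pmf I. F1 \<subseteq> W \<and> W \<inter> Xb = {}"
  proof (rule avoid[OF D0(1) F1(1)])
    show "Xb \<subseteq> pdb_facts I" "F1 \<inter> Xb = {}" by (auto simp: Xb_def)
    fix X assume X: "finite X" "X \<subseteq> Xb"
    have "X \<subseteq> pdb_facts I - Ffin"
    proof
      fix f assume "f \<in> X"
      then have "f \<in> pdb_facts I" "b \<in> set (snd f)" using X(2) by (auto simp: Xb_def)
      moreover have "f \<notin> Ffin" using \<open>b \<in> set (snd f)\<close> ab(2) by (auto simp: H_def adom_mem)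
      ultimately show "f \<in> pdb_facts I - Ffin" by simp
    qed
    then show "sum w X \<le> 1/2" using Ffin(2) X(1) by blast
  qed
  then obtain W where W: "W \<in> set_pmf I" "F1 \<subseteq> W" "W \<inter> Xb = {}" by blast
  define AW where "AW = adom W \<union> ?C"
  have A1W: "A1 \<subseteq> AW" using adom_mono[OF W(2)] by (auto simp: A1_def AW_def)
  define r where "r x = (if x \<in> A1 then x else a)" for x
  have r\<nu>: "r \<circ> \<nu>1 = \<nu>1" using aA1 bA1 by (auto simp: r_def \<nu>1_def)
  have satF: "cq_sat F1 AW \<nu>1 \<Phi>"
  proof -
    have "cq_sat F1 AW (r \<circ> \<nu>1) \<Phi>"
    proof (rule sat_hom[OF F1(3)])
      fix f assume "f \<in> F1"
      then have "map r (snd f) = snd f" by (auto simp: A1_def adom_mem r_def intro!: map_idI)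
      then show "(fst f, map r (snd f)) \<in> F1" using \<open>f \<in> F1\<close> by auto
    next
      fix c assume "c \<in> ?C" then show "r c = c" by (auto simp: A1_def r_def)
    next
      show "r ` A0 \<subseteq> AW" using aA1 A1W by (auto simp: r_def)
    qed
    then show ?thesis using r\<nu> by simp
  qed
  have satW: "cq_sat W AW \<nu>1 \<Phi>" using sat_mono[OF satF W(2)] by simp
  have "(a, b) \<in> ?V W" unfolding gv_iff using satW aA1 bA1 A1W by (auto simp: AW_def \<nu>1_def)
  then have "(b, a) \<in> ?V W" using undir[OF W(1)] by blast
  then have sat2: "cq_sat W AW ((\<lambda>_::nat. b)(0 := b, 1 := a)) \<Phi>" unfolding gv_iff by (simp add: AW_def)
  have bfacts: "\<forall>f\<in>W. b \<in> set (snd f) \<longrightarrow> f \<in> F1"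
    using W(3) facts_of_world[OF W(1)] by (auto simp: Xb_def)
  have "cq_sat W AW (mixv a b \<nu>1 ((\<lambda>_::nat. b)(0 := b, 1 := a))) \<Phi>"
    by (rule sat_mix[OF satF sat2 W(2) F1(2) bfacts]) (use aA1 A1W in auto)
  moreover have "mixv a b \<nu>1 ((\<lambda>_::nat. b)(0 := b, 1 := a)) = (\<lambda>_::nat. a)(0 := a, 1 := a)"
    using ab_ne by (auto simp: mixv_def hb_def \<nu>1_def)
  ultimately have "(a, a) \<in> ?V W" unfolding gv_iff using aA1 A1W by (auto simp: AW_def)
  then show False using simple[OF W(1)] by blast
qed


end
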